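(* The category $\mathsf{HSLat}$ of Heyting semilattices satisfies the condition (SSH): for every Heyting semilattice $B$, the kernel functor $\mathrm{Ker}_B\colon \mathsf{Pt}_B(\mathsf{HSLat})\to\mathsf{HSLat}$ reflects Huq-commuting pairs of morphisms. Explicitly: given points $(A_1,\alpha_1,\beta_1)$, $(A_2,\alpha_2,\beta_2)$, $(A,\alpha,\beta)$ over $B$ and morphisms of points $v_1\colon(A_1,\alpha_1,\beta_1)\to(A,\alpha,\beta)$, $v_2\colon(A_2,\alpha_2,\beta_2)\to(A,\alpha,\beta)$, if the restrictions $\mathrm{Ker}_B(v_1)\colon \mathrm{Ker}(\alpha_1)\to\mathrm{Ker}(\alpha)$ and $\mathrm{Ker}_B(v_2)\colon\mathrm{Ker}(\alpha_2)\to\mathrm{Ker}(\alpha)$ Huq-commute in $\mathsf{HSLat}$, then $v_1$ and $v_2$ Huq-commute in $\mathsf{Pt}_B(\mathsf{HSLat})$.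
   Context: A Heyting semilattice is a meet-semilattice $(H,\wedge)$ with top element $1$ and a binary operation $\Rightarrow$ such that $x\wedge y\le z$ iff $x\le y\Rightarrow z$; morphisms preserve $1$, $\wedge$ and $\Rightarrow$. $\mathsf{HSLat}$ is the resulting category (a pointed variety, zero object $\{1\}$). For an object $B$, $\mathsf{Pt}_B(\mathsf{HSLat})$ is the category of points over $B$: triples $(A,\alpha,\beta)$ with $\alpha\colon A\to B$, $\beta\colon B\to A$, $\alpha\beta=1_B$; morphisms $f\colon(A,\alpha,\beta)\to(A',\alpha',\beta')$ satisfy $\alpha' f=\alpha$, $f\beta=\beta'$. Its zero object is $(B,1_B,1_B)$. $\mathrm{Ker}_B$ sends $(A,\alpha,\beta)$ to $\mathrm{Ker}(\alpha)$. In a pointed category with finite products, two morphisms $f\colon X\to A$, $g\colon Y\to A$ Huq-commute if there is a morphism $\varphi\colon X\times Y\to A$ with $\varphi\circ(1_X,0)=f$ and $\varphi\circ(0,1_Y)=g$. *)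

theory Defs
  imports Main
begin

record 'a hsl =
  hcarrier :: "'a set"
  hmeet :: "'a \<Rightarrow> 'a \<Rightarrow> 'a"
  himp :: "'a \<Rightarrow> 'a \<Rightarrow> 'a"
  htop :: 'a

text \<open>Meet-semilattice with top (order: x \<le> y iff x \<and> y = x) plus an implication
  with x \<and> y \<le> z iff x \<le> y \<Rightarrow> z.\<close>
definition is_hsl :: "'a hsl \<Rightarrow> bool" where
  "is_hsl H \<longleftrightarrow>
     htop H \<in> hcarrier H \<and>
     (\<forall>x\<in>hcarrier H. \<forall>y\<in>hcarrier H. hmeet H x y \<in> hcarrier H \<and> himp H x y \<in> hcarrier H) \<and>
     (\<forall>x\<in>hcarrier H. \<forall>y\<in>hcarrier H. \<forall>z\<in>hcarrier H.
        hmeet H (hmeet H x y) z = hmeet H x (hmeet H y z)) \<and>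
     (\<forall>x\<in>hcarrier H. \<forall>y\<in>hcarrier H. hmeet H x y = hmeet H y x) \<and>
     (\<forall>x\<in>hcarrier H. hmeet H x x = x) \<and>
     (\<forall>x\<in>hcarrier H. hmeet H x (htop H) = x) \<and>
     (\<forall>x\<in>hcarrier H. \<forall>y\<in>hcarrier H. \<forall>z\<in>hcarrier H.
        (hmeet H (hmeet H x y) z = hmeet H x y) \<longleftrightarrow> (hmeet H x (himp H y z) = x))"

definition hsl_hom :: "'a hsl \<Rightarrow> 'b hsl \<Rightarrow> ('a \<Rightarrow> 'b) \<Rightarrow> bool" where
  "hsl_hom H K f \<longleftrightarrow>
     (\<forall>x\<in>hcarrier H. f x \<in> hcarrier K) \<and>
     f (htop H) = htop K \<and>
     (\<forall>x\<in>hcarrier H. \<forall>y\<in>hcarrier H.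
        f (hmeet H x y) = hmeet K (f x) (f y) \<and> f (himp H x y) = himp K (f x) (f y))"

definition prod_hsl :: "'a hsl \<Rightarrow> 'b hsl \<Rightarrow> ('a \<times> 'b) hsl" where
  "prod_hsl H K =
     \<lparr> hcarrier = hcarrier H \<times> hcarrier K,
       hmeet = (\<lambda>p q. (hmeet H (fst p) (fst q), hmeet K (snd p) (snd q))),
       himp = (\<lambda>p q. (himp H (fst p) (fst q), himp K (snd p) (snd q))),
       htop = (htop H, htop K) \<rparr>"

definition ker_hsl :: "'a hsl \<Rightarrow> 'b hsl \<Rightarrow> ('a \<Rightarrow> 'b) \<Rightarrow> 'a hsl" where
  "ker_hsl A B f = A\<lparr> hcarrier := {x \<in> hcarrier A. f x = htop B} \<rparr>"

text \<open>Pullback A1 \<times>_B A2 of \<alpha>1, \<alpha>2 (the product in Pt_B(HSLat)).\<close>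
definition pb_hsl :: "'a hsl \<Rightarrow> 'b hsl \<Rightarrow> ('a \<Rightarrow> 'c) \<Rightarrow> ('b \<Rightarrow> 'c) \<Rightarrow> ('a \<times> 'b) hsl" where
  "pb_hsl A1 A2 \<alpha>1 \<alpha>2 =
     (prod_hsl A1 A2)\<lparr> hcarrier := {p \<in> hcarrier A1 \<times> hcarrier A2. \<alpha>1 (fst p) = \<alpha>2 (snd p)} \<rparr>"

definition is_point :: "'b hsl \<Rightarrow> 'a hsl \<Rightarrow> ('a \<Rightarrow> 'b) \<Rightarrow> ('b \<Rightarrow> 'a) \<Rightarrow> bool" where
  "is_point B A \<alpha> \<beta> \<longleftrightarrow> is_hsl A \<and> hsl_hom A B \<alpha> \<and> hsl_hom B A \<beta> \<and>
     (\<forall>b\<in>hcarrier B. \<alpha> (\<beta> b) = b)"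

definition pt_hom :: "'b hsl \<Rightarrow> 'a hsl \<Rightarrow> ('a \<Rightarrow> 'b) \<Rightarrow> ('b \<Rightarrow> 'a)
                      \<Rightarrow> 'c hsl \<Rightarrow> ('c \<Rightarrow> 'b) \<Rightarrow> ('b \<Rightarrow> 'c) \<Rightarrow> ('a \<Rightarrow> 'c) \<Rightarrow> bool" where
  "pt_hom B A \<alpha> \<beta> A' \<alpha>' \<beta>' f \<longleftrightarrow> hsl_hom A A' f \<and>
     (\<forall>a\<in>hcarrier A. \<alpha>' (f a) = \<alpha> a) \<and> (\<forall>b\<in>hcarrier B. f (\<beta> b) = \<beta>' b)"

text \<open>Huq-commutation in HSLat of f : X \<rightarrow> Z and g : Y \<rightarrow> Z
  (zero morphisms are constant at the top element).\<close>
definition huq_hsl :: "'x hsl \<Rightarrow> 'y hsl \<Rightarrow> 'z hsl \<Rightarrow> ('x \<Rightarrow> 'z) \<Rightarrow> ('y \<Rightarrow> 'z) \<Rightarrow> bool" where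
  "huq_hsl X Y Z f g \<longleftrightarrow> (\<exists>\<phi>. hsl_hom (prod_hsl X Y) Z \<phi> \<and>
     (\<forall>x\<in>hcarrier X. \<phi> (x, htop Y) = f x) \<and>
     (\<forall>y\<in>hcarrier Y. \<phi> (htop X, y) = g y))"

text \<open>The product is the pullback with
  \<alpha>(a1,a2) = \<alpha>1 a1, \<beta> b = (\<beta>1 b, \<beta>2 b); the zero morphism
  (A1,\<alpha>1,\<beta>1) \<rightarrow> (A2,\<alpha>2,\<beta>2) is \<beta>2 \<circ> \<alpha>1 (it factors through (B,1,1)).\<close>
definition huq_pt :: "'b hsl \<Rightarrow> 'a1 hsl \<Rightarrow> ('a1 \<Rightarrow> 'b) \<Rightarrow> ('b \<Rightarrow> 'a1)
     \<Rightarrow> 'a2 hsl \<Rightarrow> ('a2 \<Rightarrow> 'b) \<Rightarrow> ('b \<Rightarrow> 'a2)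
     \<Rightarrow> 'a hsl \<Rightarrow> ('a \<Rightarrow> 'b) \<Rightarrow> ('b \<Rightarrow> 'a) \<Rightarrow> ('a1 \<Rightarrow> 'a) \<Rightarrow> ('a2 \<Rightarrow> 'a) \<Rightarrow> bool" where
  "huq_pt B A1 \<alpha>1 \<beta>1 A2 \<alpha>2 \<beta>2 A \<alpha> \<beta> v1 v2 \<longleftrightarrow>
     (\<exists>\<phi>. pt_hom B (pb_hsl A1 A2 \<alpha>1 \<alpha>2) (\<lambda>p. \<alpha>1 (fst p)) (\<lambda>b. (\<beta>1 b, \<beta>2 b)) A \<alpha> \<beta> \<phi> \<and>
        (\<forall>a\<in>hcarrier A1. \<phi> (a, \<beta>2 (\<alpha>1 a)) = v1 a) \<and>
        (\<forall>a\<in>hcarrier A2. \<phi> (\<beta>1 (\<alpha>2 a), a) = v2 a))"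

end

theory Submission
  imports Defs
begin


definition hle :: "'a hsl \<Rightarrow> 'a \<Rightarrow> 'a \<Rightarrow> bool" where
  "hle H x y \<longleftrightarrow> hmeet H x y = x"

locale hsl = fixes H :: "'a hsl" assumes hsl: "is_hsl H"
begin
abbreviation "C \<equiv> hcarrier H"
abbreviation "mt \<equiv> hmeet H"
abbreviation "im \<equiv> himp H"
abbreviation "one \<equiv> htop H"
abbreviation "le \<equiv> hle H"
lemmas ax = hsl[unfolded is_hsl_def]
lemmas ax1 = conjunct1[OF ax]
lemmas ax2 = conjunct1[OF conjunct2[OF ax]]
lemmas ax3 = conjunct1[OF conjunct2[OF conjunct2[OF ax]]]
lemmas ax4 = conjunct1[OF conjunct2[OF conjunct2[OF conjunct2[OF ax]]]]
lemmas ax5 = conjunct1[OF conjunct2[OF conjunct2[OF conjunct2[OF conjunct2[OF ax]]]]]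
lemmas ax6 = conjunct1[OF conjunct2[OF conjunct2[OF conjunct2[OF conjunct2[OF conjunct2[OF ax]]]]]]
lemmas ax7 = conjunct2[OF conjunct2[OF conjunct2[OF conjunct2[OF conjunct2[OF conjunct2[OF ax]]]]]]

lemma one_in[simp]: "one \<in> C" by (rule ax1)
lemma mt_in[simp]: "x \<in> C \<Longrightarrow> y \<in> C \<Longrightarrow> mt x y \<in> C" using ax2 by blast
lemma im_in[simp]: "x \<in> C \<Longrightarrow> y \<in> C \<Longrightarrow> im x y \<in> C" using ax2 by blast
lemma assoc: "x \<in> C \<Longrightarrow> y \<in> C \<Longrightarrow> z \<in> C \<Longrightarrow> mt (mt x y) z = mt x (mt y z)"
  using ax3 by blast
lemma comm: "x \<in> C \<Longrightarrow> y \<in> C \<Longrightarrow> mt x y = mt y x"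
  using ax4 by blast
lemma idem[simp]: "x \<in> C \<Longrightarrow> mt x x = x"
  using ax5 by blast
lemma mt_one[simp]: "x \<in> C \<Longrightarrow> mt x one = x"
  using ax6 by blast
lemma one_mt[simp]: "x \<in> C \<Longrightarrow> mt one x = x"
  using comm[of one x] by simp
lemma adj0: "x \<in> C \<Longrightarrow> y \<in> C \<Longrightarrow> z \<in> C \<Longrightarrow>
   (mt (mt x y) z = mt x y) \<longleftrightarrow> (mt x (im y z) = x)"
  using ax7 by blast

lemma le_refl[simp]: "x \<in> C \<Longrightarrow> le x x" by (simp add: hle_def)
lemma le_antisym: "x \<in> C \<Longrightarrow> y \<in> C \<Longrightarrow> le x y \<Longrightarrow> le y x \<Longrightarrow> x = y"
  unfolding hle_def using comm by metis
lemma le_trans: "x \<in> C \<Longrightarrow> y \<in> C \<Longrightarrow> z \<in> C \<Longrightarrow> le x y \<Longrightarrow> le y z \<Longrightarrow> le x z"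
  unfolding hle_def using assoc by metis
lemma mt_le1[simp]: "x \<in> C \<Longrightarrow> y \<in> C \<Longrightarrow> le (mt x y) x"
proof -
  assume a: "x \<in> C" "y \<in> C"
  have "mt (mt x y) x = mt x (mt x y)" using a comm by simp
  also have "\<dots> = mt (mt x x) y" using assoc[OF a(1) a(1) a(2)] by (rule sym)
  finally show ?thesis using a by (simp add: hle_def)
qed
lemma mt_le2[simp]: "x \<in> C \<Longrightarrow> y \<in> C \<Longrightarrow> le (mt x y) y"
  unfolding hle_def using assoc[of x y y] by simp
lemma le_mt_iff[simp]: "z \<in> C \<Longrightarrow> x \<in> C \<Longrightarrow> y \<in> C \<Longrightarrow> le z (mt x y) \<longleftrightarrow> le z x \<and> le z y"
proof -
  assume a: "z \<in> C" "x \<in> C" "y \<in> C"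
  show ?thesis
  proof
    assume "le z (mt x y)"
    then show "le z x \<and> le z y" using a le_trans[of z "mt x y"] by simp
  next
    assume "le z x \<and> le z y"
    then have "mt z x = z" "mt z y = z" by (auto simp: hle_def)
    then have "mt z (mt x y) = z" using a assoc by metis
    then show "le z (mt x y)" by (simp add: hle_def)
  qed
qed
lemma le_one[simp]: "x \<in> C \<Longrightarrow> le x one" by (simp add: hle_def)
lemma le_im_iff[simp]: "x \<in> C \<Longrightarrow> y \<in> C \<Longrightarrow> z \<in> C \<Longrightarrow> le x (im y z) \<longleftrightarrow> le (mt x y) z"
  unfolding hle_def using adj0 by simp
lemma one_le_iff: "x \<in> C \<Longrightarrow> le one x \<longleftrightarrow> x = one"
  unfolding hle_def by simp
lemma le_mtI1: "x \<in> C \<Longrightarrow> y \<in> C \<Longrightarrow> z \<in> C \<Longrightarrow> le x z \<Longrightarrow> le (mt x y) z"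
  using le_trans[of "mt x y" x z] by simp
lemma le_mtI2: "x \<in> C \<Longrightarrow> y \<in> C \<Longrightarrow> z \<in> C \<Longrightarrow> le y z \<Longrightarrow> le (mt x y) z"
  using le_trans[of "mt x y" y z] by simp
lemma mp: "x \<in> C \<Longrightarrow> y \<in> C \<Longrightarrow> le (mt (im x y) x) y"
  using le_im_iff[of "im x y" x y] by simp
lemma mp2: "x \<in> C \<Longrightarrow> y \<in> C \<Longrightarrow> le (mt x (im x y)) y"
  using mp comm[of x "im x y"] by simp
lemma im_one_left[simp]: "x \<in> C \<Longrightarrow> im one x = x"
  apply (rule le_antisym) using mp[of one x] by (simp_all del: one_le_iff)
lemma im_self[simp]: "x \<in> C \<Longrightarrow> im x x = one"
  apply (rule le_antisym) by simp_all
lemma im_one_right[simp]: "x \<in> C \<Longrightarrow> im x one = one"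
  apply (rule le_antisym) by simp_all
lemma le_im_one: "x \<in> C \<Longrightarrow> y \<in> C \<Longrightarrow> le x y \<longleftrightarrow> im x y = one"
  using le_im_iff[of one x y] one_le_iff[of "im x y"] by simp
lemma mt_mono: "x \<in> C \<Longrightarrow> y \<in> C \<Longrightarrow> x' \<in> C \<Longrightarrow> y' \<in> C \<Longrightarrow> le x x' \<Longrightarrow> le y y' \<Longrightarrow> le (mt x y) (mt x' y')"
  using le_mtI1 le_mtI2 by simp
lemma im_anti: "x \<in> C \<Longrightarrow> y \<in> C \<Longrightarrow> x' \<in> C \<Longrightarrow> le x' x \<Longrightarrow> le (im x y) (im x' y)"
  using le_trans[of "mt (im x y) x'" "mt (im x y) x" y] mp[of x y] mt_mono[of "im x y" x' "im x y" x] by simp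
lemma im_mono: "x \<in> C \<Longrightarrow> y \<in> C \<Longrightarrow> y' \<in> C \<Longrightarrow> le y y' \<Longrightarrow> le (im x y) (im x y')"
  using le_trans[of "mt (im x y) x" y y'] mp[of x y] by simp
end


context hsl begin
lemma mpw: "w \<in> C \<Longrightarrow> x \<in> C \<Longrightarrow> c \<in> C \<Longrightarrow> le w (im x c) \<Longrightarrow> le w x \<Longrightarrow> le w c"
  by (metis hle_def le_im_iff)
lemma leT: "x \<in> C \<Longrightarrow> y \<in> C \<Longrightarrow> z \<in> C \<Longrightarrow> le x y \<Longrightarrow> le y z \<Longrightarrow> le x z"
  by (rule le_trans)
definition E where "E x c = mt (im x c) (im c x)"
lemma E_in[simp]: "x \<in> C \<Longrightarrow> c \<in> C \<Longrightarrow> E x c \<in> C" by (simp add: E_def)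
lemma le_E_iff: "k \<in> C \<Longrightarrow> x \<in> C \<Longrightarrow> c \<in> C \<Longrightarrow> le k (E x c) \<longleftrightarrow> le (mt k x) c \<and> le (mt k c) x"
  by (simp add: E_def)

lemma CDc: assumes C: "k \<in> C" "l \<in> C" "c \<in> C" "w \<in> C"
  and hk: "im l (im (im k c) c) = im (im k c) c"
  and a: "le (mt w k) c" and b: "le (mt w l) c"
  shows "le w c"
proof -
  have 1: "le w (im k c)" using a C by simp
  have 2: "le (mt (mt w l) (im k c)) c" using b C le_mtI1 by simp
  have 3: "le w (im l (im (im k c) c))" using 2 C by simp
  have 4: "le w (im (im k c) c)" using 3 hk by simp
  show ?thesis using mpw[of w "im k c" c] 1 4 C by simp
qed

lemma CDy: assumes C: "k \<in> C" "l \<in> C" "c \<in> C" "w \<in> C" "y \<in> C"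
  and H1: "im l (im (im k c) c) = im (im k c) c"
  and H2: "im k (im (im (im y c) c) y) = im (im (im y c) c) y"
  and a: "le (mt w k) y" and b: "le (mt w l) y"
  shows "le w y"
proof -
  define R where "R = im y c"
  define S where "S = im (im R c) y"
  have RC[simp]: "R \<in> C" "S \<in> C" using C by (simp_all add: R_def S_def)
  have yS: "le y S" using C by (simp add: S_def)
  have wky: "le w (im k y)" using a C by simp
  have "le (im k y) (im k S)" using im_mono[of k y S] yS C by simp
  then have "le (im k y) S" using H2 by (simp add: S_def R_def)
  then have wS: "le w S" using wky le_trans[of w "im k y" S] C by simp
  have yR: "le (mt y R) c" using mp2[of y c] C by (simp add: R_def)
  have c1: "le (mt (mt w R) k) c"
  proof -
    have m1: "le (mt (mt w R) k) (mt w k)" using mt_mono[of "mt w R" k w k] C by simp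
    have m2: "le (mt (mt w R) k) R" using le_mtI1[of "mt w R" k R] C by simp
    have "le (mt (mt w R) k) (mt y R)"
      using m1 m2 a le_trans[of "mt (mt w R) k" "mt w k" y] C by simp
    then show ?thesis using yR le_trans C by (meson RC(1) mt_in)
  qed
  have c2: "le (mt (mt w R) l) c"
  proof -
    have m1: "le (mt (mt w R) l) (mt w l)" using mt_mono[of "mt w R" l w l] C by simp
    have m2: "le (mt (mt w R) l) R" using le_mtI1[of "mt w R" l R] C by simp
    have "le (mt (mt w R) l) (mt y R)"
      using m1 m2 b le_trans[of "mt (mt w R) l" "mt w l" y] C by simp
    then show ?thesis using yR le_trans C by (meson RC(1) mt_in)
  qed
  have wR: "le (mt w R) c" using CDc[of k l c "mt w R"] H1 c1 c2 C by simp
  then have "le w (im R c)" using C by simp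
  then show ?thesis using mpw[of w "im R c" y] wS C by (simp add: S_def)
qed

lemma lemX: assumes C: "x \<in> C" "y \<in> C" "c \<in> C" "k \<in> C" "l \<in> C"
  and kE: "le k (E x c)" and lE: "le l (E y c)"
  and Hk1: "im l (im (im k c) c) = im (im k c) c"
  and Hk2: "im k (im (im (im y c) c) y) = im (im (im y c) c) y"
  and Hl1: "im k (im (im l c) c) = im (im l c) c"
  and Hl2: "im l (im (im (im x c) c) x) = im (im (im x c) c) x"
  shows "mt (im k y) (im l x) = mt (im (E x c) y) (im (E y c) x)"
proof (rule le_antisym)
  show "le (mt (im (E x c) y) (im (E y c) x)) (mt (im k y) (im l x))"
    using mt_mono[of "im (E x c) y" "im (E y c) x" "im k y" "im l x"]
      im_anti[of "E x c" y k] im_anti[of "E y c" x l] kE lE C by simp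
  define z where "z = mt (im k y) (im l x)"
  have zC[simp]: "z \<in> C" using C by (simp add: z_def)
  have zk: "le (mt z k) y" using mt_le1[of "im k y" "im l x"] le_im_iff[of z k y] C
    by (simp add: z_def del: le_im_iff)
  have zl: "le (mt z l) x" using mt_le2[of "im k y" "im l x"] le_im_iff[of z l x] C
    by (simp add: z_def del: le_im_iff)
  have kx: "le (mt k x) c" "le (mt k c) x" using kE C le_E_iff by auto
  have ly: "le (mt l y) c" "le (mt l c) y" using lE C le_E_iff by auto
  have Ex: "le (E x c) (im x c)" "le (E x c) (im c x)"
    using mt_le1[of "im x c" "im c x"] mt_le2[of "im x c" "im c x"] C by (simp_all add: E_def del: le_im_iff)
  have Ey: "le (E y c) (im y c)" "le (E y c) (im c y)"
    using mt_le1[of "im y c" "im c y"] mt_le2[of "im y c" "im c y"] C by (simp_all add: E_def del: le_im_iff)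
  have part1: "le (mt z (E x c)) y"
  proof (rule CDy[OF C(4) C(5) C(3) _ C(2) Hk1 Hk2])
    show "mt z (E x c) \<in> C" using C by simp
    have "le (mt (mt z (E x c)) k) (mt z k)" using mt_mono[of "mt z (E x c)" k z k] C by simp
    then show "le (mt (mt z (E x c)) k) y" using zk le_trans C by (meson E_in mt_in zC)
    define w where "w = mt (mt z (E x c)) l"
    have wC: "w \<in> C" using C by (simp add: w_def)
    have w1: "le w (mt z l)" using mt_mono[of "mt z (E x c)" l z l] C by (simp add: w_def)
    have w2: "le w x" using le_trans[OF wC _ _ w1 zl] C by simp
    have w3: "le w (im x c)" using le_trans[of w "E x c" "im x c"] Ex C
      le_mtI1[of "mt z (E x c)" l "E x c"] le_mtI2[of z "E x c" "E x c"] by (simp add: w_def)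
    have w4: "le w c" using mpw[OF wC C(1) C(3) w3 w2] .
    have w5: "le w (im c y)" using le_trans[of w l "E y c"] le_trans[of w "E y c" "im c y"] Ey lE C
       by (simp add: w_def)
    show "le (mt (mt z (E x c)) l) y" using mpw[OF wC C(3) C(2) w5 w4] by (simp add: w_def)
  qed
  have part2: "le (mt z (E y c)) x"
  proof (rule CDy[OF C(5) C(4) C(3) _ C(1) Hl1 Hl2])
    show "mt z (E y c) \<in> C" using C by simp
    have "le (mt (mt z (E y c)) l) (mt z l)" using mt_mono[of "mt z (E y c)" l z l] C by simp
    then show "le (mt (mt z (E y c)) l) x" using zl le_trans C by (meson E_in mt_in zC)
    define w where "w = mt (mt z (E y c)) k"
    have wC: "w \<in> C" using C by (simp add: w_def)
    have w1: "le w (mt z k)" using mt_mono[of "mt z (E y c)" k z k] C by (simp add: w_def)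
    have w2: "le w y" using le_trans[OF wC _ _ w1 zk] C by simp
    have w3: "le w (im y c)" using le_trans[of w "E y c" "im y c"] Ey C
      le_mtI1[of "mt z (E y c)" k "E y c"] le_mtI2[of z "E y c" "E y c"] by (simp add: w_def)
    have w4: "le w c" using mpw[OF wC C(2) C(3) w3 w2] .
    have w5: "le w (im c x)" using le_trans[of w k "E x c"] le_trans[of w "E x c" "im c x"] Ex kE C
       by (simp add: w_def)
    show "le (mt (mt z (E y c)) k) x" using mpw[OF wC C(3) C(1) w5 w4] by (simp add: w_def)
  qed
  show "le (mt (im k y) (im l x)) (mt (im (E x c) y) (im (E y c) x))"
    using part1 part2 C by (simp add: z_def[symmetric])
  show "mt (im k y) (im l x) \<in> C" "mt (im (E x c) y) (im (E y c) x) \<in> C" using C by simp_all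
qed

lemma ext_le: "a \<in> C \<Longrightarrow> b \<in> C \<Longrightarrow> (\<And>z. z \<in> C \<Longrightarrow> le z a \<longleftrightarrow> le z b) \<Longrightarrow> a = b"
  by (meson le_antisym le_refl)

lemma phiK: assumes C: "x \<in> C" "y \<in> C" "c \<in> C" "k \<in> C" "l \<in> C"
  and kx: "le (mt k x) c" "le (mt k c) x" and ly: "le (mt l y) c" "le (mt l c) y"
  shows "mt (mt (im k y) (im l x)) k = mt k y" "mt (mt (im k y) (im l x)) l = mt l x"
proof -
  have a1: "le (mt (mt (im k y) (im l x)) k) y"
    using le_mtI1[of "im k y" "im l x" "im k y"] C le_im_iff[of "mt (im k y) (im l x)" k y]
    by (simp del: le_im_iff)
  have a2: "le (mt (mt (im k y) (im l x)) l) x"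
    using le_mtI2[of "im k y" "im l x" "im l x"] C le_im_iff[of "mt (im k y) (im l x)" l x]
    by (simp del: le_im_iff)
  have b1: "le (mt (mt k y) l) x"
  proof -
    have "le (mt (mt k y) l) (mt k c)"
    proof -
      have "le (mt (mt k y) l) (mt l y)" using le_mtI1[of "mt k y" l y] C by simp
      then have "le (mt (mt k y) l) c" using le_trans[of "mt (mt k y) l" "mt l y" c] ly C by simp
      then show ?thesis using C le_mtI1[of "mt k y" l k] by simp
    qed
    then show ?thesis using kx le_trans C by (meson mt_in)
  qed
  have b2: "le (mt (mt l x) k) y"
  proof -
    have "le (mt (mt l x) k) (mt l c)"
    proof -
      have "le (mt (mt l x) k) (mt k x)" using le_mtI1[of "mt l x" k x] C by simp
      then have "le (mt (mt l x) k) c" using le_trans[of "mt (mt l x) k" "mt k x" c] kx C by simp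
      then show ?thesis using C le_mtI1[of "mt l x" k l] by simp
    qed
    then show ?thesis using ly le_trans C by (meson mt_in)
  qed
  show "mt (mt (im k y) (im l x)) k = mt k y"
  proof (rule le_antisym)
    show "le (mt (mt (im k y) (im l x)) k) (mt k y)" using a1 C by simp
    show "le (mt k y) (mt (mt (im k y) (im l x)) k)" using C b1 le_mtI1[of "mt k y" k y]
      by simp
  qed (use C in simp_all)
  show "mt (mt (im k y) (im l x)) l = mt l x"
  proof (rule le_antisym)
    show "le (mt (mt (im k y) (im l x)) l) (mt l x)" using a2 C by simp
    show "le (mt l x) (mt (mt (im k y) (im l x)) l)" using C b2 le_mtI1[of "mt l x" l x]
      by simp
  qed (use C in simp_all)
qed

lemma le2: "w \<in> C \<Longrightarrow> a \<in> C \<Longrightarrow> b \<in> C \<Longrightarrow> t \<in> C \<Longrightarrow> le w a \<Longrightarrow> le w b \<Longrightarrow> le (mt a b) t \<Longrightarrow> le w t"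
  using le_trans[of w "mt a b" t] by simp

lemma Ek_meet: assumes C: "x \<in> C" "x' \<in> C" "c \<in> C" "c' \<in> C" "k \<in> C"
  and h: "le k (E x c)" "le k (E x' c')"
  shows "le k (E (mt x x') (mt c c'))"
proof -
  have h1: "le (mt k x) c" "le (mt k c) x" "le (mt k x') c'" "le (mt k c') x'"
    using h C le_E_iff by auto
  define w where "w = mt k (mt x x')"
  have w: "w \<in> C" "le w k" "le w x" "le w x'" using C by (simp_all add: w_def le_mtI1 le_mtI2)
  define v where "v = mt k (mt c c')"
  have v: "v \<in> C" "le v k" "le v c" "le v c'" using C by (simp_all add: v_def le_mtI1 le_mtI2)
  have "le w c" using le2[OF w(1) C(5) C(1) C(3) w(2) w(3) h1(1)] .
  moreover have "le w c'" using le2[OF w(1) C(5) C(2) C(4) w(2) w(4) h1(3)] .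
  moreover have "le v x" using le2[OF v(1) C(5) C(3) C(1) v(2) v(3) h1(2)] .
  moreover have "le v x'" using le2[OF v(1) C(5) C(4) C(2) v(2) v(4) h1(4)] .
  ultimately show ?thesis using C by (simp add: le_E_iff w_def v_def)
qed

lemma Ek_imp: assumes C: "x \<in> C" "x' \<in> C" "c \<in> C" "c' \<in> C" "k \<in> C"
  and h: "le k (E x c)" "le k (E x' c')"
  shows "le k (E (im x x') (im c c'))"
proof -
  have h1: "le (mt k x) c" "le (mt k c) x" "le (mt k x') c'" "le (mt k c') x'"
    using h C le_E_iff by auto
  define w where "w = mt (mt k (im x x')) c"
  have w: "w \<in> C" "le w k" "le w (im x x')" "le w c" using C
    by (simp_all add: w_def le_mtI1 le_mtI2 del: le_im_iff)
  have wx: "le w x" using le2[OF w(1) C(5) C(3) C(1) w(2) w(4) h1(2)] .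
  have wx': "le w x'" using mpw[OF w(1) C(1) C(2) w(3) wx] .
  have 1: "le w c'" using le2[OF w(1) C(5) C(2) C(4) w(2) wx' h1(3)] .
  define v where "v = mt (mt k (im c c')) x"
  have v: "v \<in> C" "le v k" "le v (im c c')" "le v x" using C
    by (simp_all add: v_def le_mtI1 le_mtI2 del: le_im_iff)
  have vc: "le v c" using le2[OF v(1) C(5) C(1) C(3) v(2) v(4) h1(1)] .
  have vc': "le v c'" using mpw[OF v(1) C(3) C(4) v(3) vc] .
  have 2: "le v x'" using le2[OF v(1) C(5) C(4) C(2) v(2) vc' h1(4)] .
  show ?thesis using C 1 2 by (simp add: le_E_iff w_def v_def)
qed

lemma im_mt_distrib: "k \<in> C \<Longrightarrow> y \<in> C \<Longrightarrow> y' \<in> C \<Longrightarrow> im k (mt y y') = mt (im k y) (im k y')"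
  by (rule ext_le) simp_all

lemma meet_id: assumes C: "x \<in> C" "y \<in> C" "x' \<in> C" "y' \<in> C" "k \<in> C" "l \<in> C"
  shows "mt (im k (mt y y')) (im l (mt x x')) = mt (mt (im k y) (im l x)) (mt (im k y') (im l x'))"
  using C by (intro ext_le) auto

lemma imp_id: assumes C: "x \<in> C" "y \<in> C" "x' \<in> C" "y' \<in> C" "c \<in> C" "c' \<in> C" "k \<in> C" "l \<in> C"
  and kx: "le (mt k x) c" "le (mt k c) x" and ly: "le (mt l y) c" "le (mt l c) y"
  shows "mt (im k (im y y')) (im l (im x x')) = im (mt (im k y) (im l x)) (mt (im k y') (im l x'))"
proof (rule ext_le)
  define \<phi> where "\<phi> = mt (im k y) (im l x)"
  have pC: "\<phi> \<in> C" using C by (simp add: \<phi>_def)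
  have pk: "mt \<phi> k = mt k y" "mt \<phi> l = mt l x" using phiK[OF C(1) C(2) C(5) C(7) C(8) kx ly]
    by (simp_all add: \<phi>_def)
  fix z assume z: "z \<in> C"
  have e1: "mt (mt z \<phi>) k = mt (mt z k) y" using pk C z pC by (metis assoc)
  have e2: "mt (mt z \<phi>) l = mt (mt z l) x" using pk C z pC by (metis assoc)
  show "le z (mt (im k (im y y')) (im l (im x x'))) \<longleftrightarrow> le z (im (mt (im k y) (im l x)) (mt (im k y') (im l x')))"
    using C z pC e1 e2 by (simp add: \<phi>_def[symmetric])
qed (use C in simp_all)
end



locale setting =
  fixes B :: "'b hsl"
    and A1 :: "'a1 hsl" and \<alpha>1 :: "'a1 \<Rightarrow> 'b" and \<beta>1 :: "'b \<Rightarrow> 'a1"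
    and A2 :: "'a2 hsl" and \<alpha>2 :: "'a2 \<Rightarrow> 'b" and \<beta>2 :: "'b \<Rightarrow> 'a2"
    and A :: "'a hsl" and \<alpha> :: "'a \<Rightarrow> 'b" and \<beta> :: "'b \<Rightarrow> 'a"
    and v1 :: "'a1 \<Rightarrow> 'a" and v2 :: "'a2 \<Rightarrow> 'a"
  assumes hB: "is_hsl B"
    and p1: "is_point B A1 \<alpha>1 \<beta>1"
    and p2: "is_point B A2 \<alpha>2 \<beta>2"
    and p: "is_point B A \<alpha> \<beta>"
    and h1: "pt_hom B A1 \<alpha>1 \<beta>1 A \<alpha> \<beta> v1"
    and h2: "pt_hom B A2 \<alpha>2 \<beta>2 A \<alpha> \<beta> v2"
    and hq: "huq_hsl (ker_hsl A1 B \<alpha>1) (ker_hsl A2 B \<alpha>2) (ker_hsl A B \<alpha>) v1 v2"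
begin

sublocale B: hsl B using hB by unfold_locales
sublocale A1: hsl A1 using p1 unfolding is_point_def by (unfold_locales) blast
sublocale A2: hsl A2 using p2 unfolding is_point_def by (unfold_locales) blast
sublocale A: hsl A using p unfolding is_point_def by (unfold_locales) blast

lemma homs: "hsl_hom A1 B \<alpha>1" "hsl_hom B A1 \<beta>1" "hsl_hom A2 B \<alpha>2" "hsl_hom B A2 \<beta>2"
  "hsl_hom A B \<alpha>" "hsl_hom B A \<beta>" "hsl_hom A1 A v1" "hsl_hom A2 A v2"
  using p1 p2 p h1 h2 unfolding is_point_def pt_hom_def by blast+

lemma hom_in: "hsl_hom H K f \<Longrightarrow> x \<in> hcarrier H \<Longrightarrow> f x \<in> hcarrier K"
  unfolding hsl_hom_def by blast
lemma hom_top: "hsl_hom H K f \<Longrightarrow> f (htop H) = htop K"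
  unfolding hsl_hom_def by blast
lemma hom_mt: "hsl_hom H K f \<Longrightarrow> x \<in> hcarrier H \<Longrightarrow> y \<in> hcarrier H \<Longrightarrow> f (hmeet H x y) = hmeet K (f x) (f y)"
  unfolding hsl_hom_def by blast
lemma hom_im: "hsl_hom H K f \<Longrightarrow> x \<in> hcarrier H \<Longrightarrow> y \<in> hcarrier H \<Longrightarrow> f (himp H x y) = himp K (f x) (f y)"
  unfolding hsl_hom_def by blast

lemmas hin[simp] = hom_in[OF homs(1)] hom_in[OF homs(2)] hom_in[OF homs(3)] hom_in[OF homs(4)]
   hom_in[OF homs(5)] hom_in[OF homs(6)] hom_in[OF homs(7)] hom_in[OF homs(8)]
lemmas htop[simp] = hom_top[OF homs(1)] hom_top[OF homs(2)] hom_top[OF homs(3)] hom_top[OF homs(4)]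
   hom_top[OF homs(5)] hom_top[OF homs(6)] hom_top[OF homs(7)] hom_top[OF homs(8)]
lemmas hmt[simp] = hom_mt[OF homs(1)] hom_mt[OF homs(2)] hom_mt[OF homs(3)] hom_mt[OF homs(4)]
   hom_mt[OF homs(5)] hom_mt[OF homs(6)] hom_mt[OF homs(7)] hom_mt[OF homs(8)]
lemmas him[simp] = hom_im[OF homs(1)] hom_im[OF homs(2)] hom_im[OF homs(3)] hom_im[OF homs(4)]
   hom_im[OF homs(5)] hom_im[OF homs(6)] hom_im[OF homs(7)] hom_im[OF homs(8)]

lemma sec[simp]: "b \<in> B.C \<Longrightarrow> \<alpha>1 (\<beta>1 b) = b" "b \<in> B.C \<Longrightarrow> \<alpha>2 (\<beta>2 b) = b" "b \<in> B.C \<Longrightarrow> \<alpha> (\<beta> b) = b"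
  using p1 p2 p unfolding is_point_def by blast+
lemma comp1[simp]: "a \<in> A1.C \<Longrightarrow> \<alpha> (v1 a) = \<alpha>1 a" "b \<in> B.C \<Longrightarrow> v1 (\<beta>1 b) = \<beta> b"
  using h1 unfolding pt_hom_def by blast+
lemma comp2[simp]: "a \<in> A2.C \<Longrightarrow> \<alpha> (v2 a) = \<alpha>2 a" "b \<in> B.C \<Longrightarrow> v2 (\<beta>2 b) = \<beta> b"
  using h2 unfolding pt_hom_def by blast+

lemma H: assumes "k1 \<in> A1.C" "\<alpha>1 k1 = B.one" "k2 \<in> A2.C" "\<alpha>2 k2 = B.one"
  shows "A.im (v1 k1) (v2 k2) = v2 k2" "A.im (v2 k2) (v1 k1) = v1 k1"
proof -
  obtain \<psi> where ps: "hsl_hom (prod_hsl (ker_hsl A1 B \<alpha>1) (ker_hsl A2 B \<alpha>2)) (ker_hsl A B \<alpha>) \<psi>"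
    "\<forall>x\<in>hcarrier (ker_hsl A1 B \<alpha>1). \<psi> (x, htop (ker_hsl A2 B \<alpha>2)) = v1 x"
    "\<forall>y\<in>hcarrier (ker_hsl A2 B \<alpha>2). \<psi> (htop (ker_hsl A1 B \<alpha>1), y) = v2 y"
    using hq unfolding huq_hsl_def by blast
  have c1: "(k1, A2.one) \<in> hcarrier (prod_hsl (ker_hsl A1 B \<alpha>1) (ker_hsl A2 B \<alpha>2))"
    and c2: "(A1.one, k2) \<in> hcarrier (prod_hsl (ker_hsl A1 B \<alpha>1) (ker_hsl A2 B \<alpha>2))"
    using assms by (simp_all add: prod_hsl_def ker_hsl_def)
  have e1: "\<psi> (k1, A2.one) = v1 k1" using ps(2) assms by (simp add: ker_hsl_def)
  have e2: "\<psi> (A1.one, k2) = v2 k2" using ps(3) assms by (simp add: ker_hsl_def)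
  have "\<psi> (himp (prod_hsl (ker_hsl A1 B \<alpha>1) (ker_hsl A2 B \<alpha>2)) (k1, A2.one) (A1.one, k2))
        = himp (ker_hsl A B \<alpha>) (\<psi> (k1, A2.one)) (\<psi> (A1.one, k2))"
    using hom_im[OF ps(1) c1 c2] .
  then show "A.im (v1 k1) (v2 k2) = v2 k2" using assms e1 e2
    by (simp add: prod_hsl_def ker_hsl_def)
  have "\<psi> (himp (prod_hsl (ker_hsl A1 B \<alpha>1) (ker_hsl A2 B \<alpha>2)) (A1.one, k2) (k1, A2.one))
        = himp (ker_hsl A B \<alpha>) (\<psi> (A1.one, k2)) (\<psi> (k1, A2.one))"
    using hom_im[OF ps(1) c2 c1] .
  then show "A.im (v2 k2) (v1 k1) = v1 k1" using assms e1 e2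
    by (simp add: prod_hsl_def ker_hsl_def)
qed


lemma bound1: "x \<in> A.C \<Longrightarrow> c \<in> A.C \<Longrightarrow> A.mt (A.im (A.E x c) c) x = x"
proof -
  assume C: "x \<in> A.C" "c \<in> A.C"
  have w: "A.le (A.mt x (A.E x c)) x" "A.le (A.mt x (A.E x c)) (A.im x c)"
    using C A.mt_le1[of "A.im x c" "A.im c x"] A.le_mtI2[of x "A.E x c" "A.im x c"]
    by (simp_all add: A.E_def del: A.le_im_iff)
  have "A.le (A.mt x (A.E x c)) c" using A.mpw[OF _ C(1) C(2) w(2) w(1)] C by simp
  then have "A.le x (A.im (A.E x c) c)" using C by simp
  then have "A.mt x (A.im (A.E x c) c) = x" by (simp add: hle_def)
  then show ?thesis using A.comm[of x "A.im (A.E x c) c"] C by simp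
qed

definition K1 where "K1 = {k \<in> A1.C. \<alpha>1 k = B.one}"
definition K2 where "K2 = {k \<in> A2.C. \<alpha>2 k = B.one}"

lemma E1_ker: "a \<in> A1.C \<Longrightarrow> A1.E a (\<beta>1 (\<alpha>1 a)) \<in> K1"
  by (simp add: K1_def A1.E_def)
lemma E2_ker: "a \<in> A2.C \<Longrightarrow> A2.E a (\<beta>2 (\<alpha>2 a)) \<in> K2"
  by (simp add: K2_def A2.E_def)
lemma vE1: "a \<in> A1.C \<Longrightarrow> b \<in> B.C \<Longrightarrow> v1 (A1.E a (\<beta>1 b)) = A.E (v1 a) (\<beta> b)"
  by (simp add: A1.E_def A.E_def)
lemma vE2: "a \<in> A2.C \<Longrightarrow> b \<in> B.C \<Longrightarrow> v2 (A2.E a (\<beta>2 b)) = A.E (v2 a) (\<beta> b)"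
  by (simp add: A2.E_def A.E_def)

lemma lemX': assumes a: "a1 \<in> A1.C" "a2 \<in> A2.C" "\<alpha>1 a1 = \<alpha>2 a2"
  and k: "k1 \<in> K1" "k2 \<in> K2"
  and kE: "A.le (v1 k1) (A.E (v1 a1) (\<beta> (\<alpha>1 a1)))" and lE: "A.le (v2 k2) (A.E (v2 a2) (\<beta> (\<alpha>1 a1)))"
  shows "A.mt (A.im (v1 k1) (v2 a2)) (A.im (v2 k2) (v1 a1)) =
     A.mt (A.im (A.E (v1 a1) (\<beta> (\<alpha>1 a1))) (v2 a2)) (A.im (A.E (v2 a2) (\<beta> (\<alpha>1 a1))) (v1 a1))"
proof -
  define b where "b = \<alpha>1 a1"
  have bC: "b \<in> B.C" using a by (simp add: b_def)
  have kk: "k1 \<in> A1.C" "\<alpha>1 k1 = B.one" "k2 \<in> A2.C" "\<alpha>2 k2 = B.one" using k by (auto simp: K1_def K2_def)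
  have Hk1: "A.im (v2 k2) (A.im (A.im (v1 k1) (\<beta> b)) (\<beta> b)) = A.im (A.im (v1 k1) (\<beta> b)) (\<beta> b)"
    using H(2)[of "A1.im (A1.im k1 (\<beta>1 b)) (\<beta>1 b)" k2] kk bC by simp
  have Hk2: "A.im (v1 k1) (A.im (A.im (A.im (v2 a2) (\<beta> b)) (\<beta> b)) (v2 a2)) =
     A.im (A.im (A.im (v2 a2) (\<beta> b)) (\<beta> b)) (v2 a2)"
    using H(1)[of k1 "A2.im (A2.im (A2.im a2 (\<beta>2 b)) (\<beta>2 b)) a2"] kk bC a by (simp add: b_def)
  have Hl1: "A.im (v1 k1) (A.im (A.im (v2 k2) (\<beta> b)) (\<beta> b)) = A.im (A.im (v2 k2) (\<beta> b)) (\<beta> b)"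
    using H(1)[of k1 "A2.im (A2.im k2 (\<beta>2 b)) (\<beta>2 b)"] kk bC by simp
  have Hl2: "A.im (v2 k2) (A.im (A.im (A.im (v1 a1) (\<beta> b)) (\<beta> b)) (v1 a1)) =
     A.im (A.im (A.im (v1 a1) (\<beta> b)) (\<beta> b)) (v1 a1)"
    using H(2)[of "A1.im (A1.im (A1.im a1 (\<beta>1 b)) (\<beta>1 b)) a1" k2] kk bC a by (simp add: b_def)
  have kE': "A.le (v1 k1) (A.E (v1 a1) (\<beta> b))" using kE by (simp only: b_def)
  have lE': "A.le (v2 k2) (A.E (v2 a2) (\<beta> b))" using lE by (simp only: b_def)
  have cs: "v1 a1 \<in> A.C" "v2 a2 \<in> A.C" "\<beta> b \<in> A.C" "v1 k1 \<in> A.C" "v2 k2 \<in> A.C"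
    using a kk bC by simp_all
  have "A.mt (A.im (v1 k1) (v2 a2)) (A.im (v2 k2) (v1 a1)) =
     A.mt (A.im (A.E (v1 a1) (\<beta> b)) (v2 a2)) (A.im (A.E (v2 a2) (\<beta> b)) (v1 a1))"
    by (rule A.lemX[OF cs kE' lE' Hk1 Hk2 Hl1 Hl2])
  then show ?thesis by (simp only: b_def)
qed

definition Phi where "Phi p = A.mt (A.im (A.E (v1 (fst p)) (\<beta> (\<alpha>1 (fst p)))) (v2 (snd p)))
    (A.im (A.E (v2 (snd p)) (\<beta> (\<alpha>1 (fst p)))) (v1 (fst p)))"

abbreviation "PB \<equiv> pb_hsl A1 A2 \<alpha>1 \<alpha>2"
lemma pb_simps[simp]: "hcarrier PB = {p \<in> A1.C \<times> A2.C. \<alpha>1 (fst p) = \<alpha>2 (snd p)}"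
  "hmeet PB p q = (A1.mt (fst p) (fst q), A2.mt (snd p) (snd q))"
  "himp PB p q = (A1.im (fst p) (fst q), A2.im (snd p) (snd q))"
  "htop PB = (A1.one, A2.one)"
  by (simp_all add: pb_hsl_def prod_hsl_def)

lemma K_simps: "k \<in> K1 \<Longrightarrow> k' \<in> K1 \<Longrightarrow> A1.mt k k' \<in> K1" "j \<in> K2 \<Longrightarrow> j' \<in> K2 \<Longrightarrow> A2.mt j j' \<in> K2"
  by (auto simp: K1_def K2_def)

lemma Phi_hom:
  assumes a: "a1 \<in> A1.C" "a2 \<in> A2.C" "\<alpha>1 a1 = \<alpha>2 a2" "a1' \<in> A1.C" "a2' \<in> A2.C" "\<alpha>1 a1' = \<alpha>2 a2'"
  shows "Phi (A1.mt a1 a1', A2.mt a2 a2') = A.mt (Phi (a1, a2)) (Phi (a1', a2'))"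
    "Phi (A1.im a1 a1', A2.im a2 a2') = A.im (Phi (a1, a2)) (Phi (a1', a2'))"
proof -
  define b where "b = \<alpha>1 a1"
  define b' where "b' = \<alpha>1 a1'"
  have bC: "b \<in> B.C" "b' \<in> B.C" using a by (simp_all add: b_def b'_def)
  define x where "x = v1 a1"
  define x' where "x' = v1 a1'"
  define y where "y = v2 a2"
  define y' where "y' = v2 a2'"
  define c where "c = \<beta> b"
  define c' where "c' = \<beta> b'"
  have C: "x \<in> A.C" "x' \<in> A.C" "y \<in> A.C" "y' \<in> A.C" "c \<in> A.C" "c' \<in> A.C"
    using a bC by (simp_all add: x_def x'_def y_def y'_def c_def c'_def)
  define k1 where "k1 = A1.mt (A1.E a1 (\<beta>1 b)) (A1.E a1' (\<beta>1 b'))"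
  define k2 where "k2 = A2.mt (A2.E a2 (\<beta>2 b)) (A2.E a2' (\<beta>2 b'))"
  have kK: "k1 \<in> K1" "k2 \<in> K2" using E1_ker[of a1] E1_ker[of a1'] E2_ker[of a2] E2_ker[of a2'] a K_simps
    by (simp_all add: k1_def k2_def b_def b'_def)
  have vk1: "v1 k1 = A.mt (A.E x c) (A.E x' c')"
    using a bC by (simp add: k1_def vE1 x_def x'_def c_def c'_def)
  have vk2: "v2 k2 = A.mt (A.E y c) (A.E y' c')"
    using a bC by (simp add: k2_def vE2 y_def y'_def c_def c'_def)
  define k where "k = v1 k1"
  define l where "l = v2 k2"
  have klC: "k \<in> A.C" "l \<in> A.C" using C by (simp_all add: k_def l_def vk1 vk2)
  have kE: "A.le k (A.E x c)" "A.le k (A.E x' c')" using C by (simp_all add: k_def vk1 A.le_mtI1 A.le_mtI2)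
  have lE: "A.le l (A.E y c)" "A.le l (A.E y' c')" using C by (simp_all add: l_def vk2 A.le_mtI1 A.le_mtI2)
  have P1: "Phi (a1, a2) = A.mt (A.im k y) (A.im l x)"
    using lemX'[OF a(1-3) kK] kE lE a
    by (simp add: Phi_def k_def l_def x_def y_def c_def b_def)
  have P2: "Phi (a1', a2') = A.mt (A.im k y') (A.im l x')"
    using lemX'[OF a(4-6) kK] kE lE a
    by (simp add: Phi_def k_def l_def x'_def y'_def c'_def b'_def)
  have mC: "A1.mt a1 a1' \<in> A1.C" "A2.mt a2 a2' \<in> A2.C" "\<alpha>1 (A1.mt a1 a1') = \<alpha>2 (A2.mt a2 a2')"
    using a by simp_all
  have kEm: "A.le k (A.E (A.mt x x') (A.mt c c'))" using A.Ek_meet[OF C(1) C(2) C(5) C(6) klC(1) kE] .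
  have lEm: "A.le l (A.E (A.mt y y') (A.mt c c'))" using A.Ek_meet[OF C(3) C(4) C(5) C(6) klC(2) lE] .
  have "Phi (A1.mt a1 a1', A2.mt a2 a2') = A.mt (A.im k (A.mt y y')) (A.im l (A.mt x x'))"
    using lemX'[OF mC kK] kEm lEm a bC
    by (simp add: Phi_def k_def l_def x_def y_def c_def b_def x'_def y'_def c'_def b'_def)
  also have "\<dots> = A.mt (Phi (a1, a2)) (Phi (a1', a2'))"
    unfolding P1 P2 by (rule A.meet_id) (use C klC in simp_all)
  finally show "Phi (A1.mt a1 a1', A2.mt a2 a2') = A.mt (Phi (a1, a2)) (Phi (a1', a2'))" .
  have iC: "A1.im a1 a1' \<in> A1.C" "A2.im a2 a2' \<in> A2.C" "\<alpha>1 (A1.im a1 a1') = \<alpha>2 (A2.im a2 a2')"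
    using a by simp_all
  have kEi: "A.le k (A.E (A.im x x') (A.im c c'))" using A.Ek_imp[OF C(1) C(2) C(5) C(6) klC(1) kE] .
  have lEi: "A.le l (A.E (A.im y y') (A.im c c'))" using A.Ek_imp[OF C(3) C(4) C(5) C(6) klC(2) lE] .
  have "Phi (A1.im a1 a1', A2.im a2 a2') = A.mt (A.im k (A.im y y')) (A.im l (A.im x x'))"
    using lemX'[OF iC kK] kEi lEi a bC
    by (simp add: Phi_def k_def l_def x_def y_def c_def b_def x'_def y'_def c'_def b'_def)
  also have "\<dots> = A.im (Phi (a1, a2)) (Phi (a1', a2'))"
  proof -
    have kx: "A.le (A.mt k x) c" "A.le (A.mt k c) x" using kE(1) C klC A.le_E_iff by auto
    have ly: "A.le (A.mt l y) c" "A.le (A.mt l c) y" using lE(1) C klC A.le_E_iff by auto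
    show ?thesis unfolding P1 P2 by (rule A.imp_id[OF C(1) C(3) C(2) C(4) C(5) C(6) klC kx ly])
  qed
  finally show "Phi (A1.im a1 a1', A2.im a2 a2') = A.im (Phi (a1, a2)) (Phi (a1', a2'))" .
qed

lemma main: "huq_pt B A1 \<alpha>1 \<beta>1 A2 \<alpha>2 \<beta>2 A \<alpha> \<beta> v1 v2"
  unfolding huq_pt_def
proof (intro exI[of _ Phi] conjI ballI)
  show "pt_hom B PB (\<lambda>p. \<alpha>1 (fst p)) (\<lambda>b. (\<beta>1 b, \<beta>2 b)) A \<alpha> \<beta> Phi"
    unfolding pt_hom_def hsl_hom_def
  proof (intro conjI ballI)
    fix p assume "p \<in> hcarrier PB"
    then show "Phi p \<in> A.C" by (auto simp: Phi_def)
  next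
    show "Phi (htop PB) = A.one" by (simp add: Phi_def A.E_def)
  next
    fix p q assume pq: "p \<in> hcarrier PB" "q \<in> hcarrier PB"
    obtain a1 a2 where p: "p = (a1, a2)" by (cases p)
    obtain a1' a2' where q: "q = (a1', a2')" by (cases q)
    show "Phi (hmeet PB p q) = A.mt (Phi p) (Phi q)" "Phi (himp PB p q) = A.im (Phi p) (Phi q)"
      using Phi_hom[of a1 a2 a1' a2'] pq p q by auto
  next
    fix p assume "p \<in> hcarrier PB"
    then show "\<alpha> (Phi p) = \<alpha>1 (fst p)" by (auto simp: Phi_def A.E_def)
  next
    fix b assume "b \<in> B.C"
    then show "Phi (\<beta>1 b, \<beta>2 b) = \<beta> b" by (simp add: Phi_def A.E_def)
  qed
next
  fix a assume a: "a \<in> A1.C"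
  have "A.E (\<beta> (\<alpha>1 a)) (\<beta> (\<alpha>1 a)) = A.one" using a by (simp add: A.E_def)
  then show "Phi (a, \<beta>2 (\<alpha>1 a)) = v1 a" using a bound1[of "v1 a" "\<beta> (\<alpha>1 a)"] by (simp add: Phi_def)
next
  fix a assume a: "a \<in> A2.C"
  have "A.E (\<beta> (\<alpha>2 a)) (\<beta> (\<alpha>2 a)) = A.one" using a by (simp add: A.E_def)
  moreover have "A.mt (v2 a) (A.im (A.E (v2 a) (\<beta> (\<alpha>2 a))) (\<beta> (\<alpha>2 a))) = v2 a"
    using a bound1[of "v2 a" "\<beta> (\<alpha>2 a)"] A.comm[of "v2 a" "A.im (A.E (v2 a) (\<beta> (\<alpha>2 a))) (\<beta> (\<alpha>2 a))"]
    by simp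
  ultimately show "Phi (\<beta>1 (\<alpha>2 a), a) = v2 a" using a by (simp add: Phi_def)
qed
end


theorem mainTheorem1:
  fixes B :: "'b hsl"
    and A1 :: "'a1 hsl" and \<alpha>1 :: "'a1 \<Rightarrow> 'b" and \<beta>1 :: "'b \<Rightarrow> 'a1"
    and A2 :: "'a2 hsl" and \<alpha>2 :: "'a2 \<Rightarrow> 'b" and \<beta>2 :: "'b \<Rightarrow> 'a2"
    and A :: "'a hsl" and \<alpha> :: "'a \<Rightarrow> 'b" and \<beta> :: "'b \<Rightarrow> 'a"
    and v1 :: "'a1 \<Rightarrow> 'a" and v2 :: "'a2 \<Rightarrow> 'a"
  assumes "is_hsl B"
    and "is_point B A1 \<alpha>1 \<beta>1"
    and "is_point B A2 \<alpha>2 \<beta>2"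
    and "is_point B A \<alpha> \<beta>"
    and "pt_hom B A1 \<alpha>1 \<beta>1 A \<alpha> \<beta> v1"
    and "pt_hom B A2 \<alpha>2 \<beta>2 A \<alpha> \<beta> v2"
    and "huq_hsl (ker_hsl A1 B \<alpha>1) (ker_hsl A2 B \<alpha>2) (ker_hsl A B \<alpha>) v1 v2"
  shows "huq_pt B A1 \<alpha>1 \<beta>1 A2 \<alpha>2 \<beta>2 A \<alpha> \<beta> v1 v2"
proof -
  interpret S: setting B A1 \<alpha>1 \<beta>1 A2 \<alpha>2 \<beta>2 A \<alpha> \<beta> v1 v2
    using assms by (unfold_locales) auto
  show ?thesis by (rule S.main)
qed

end
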